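(* Let $A$ be a unital $\mathrm{C}^*$-algebra containing a closed two-sided ideal $J$ and an operator system $X$. (i) If $\Pi:\mathcal{B}(X,J)\to B(H)$ is a unital $*$-representation annihilating $\mathbb{M}_2(J)$, then there is a unique $*$-representation $\pi:\mathrm{C}^*(X)+J\to B(H)$ annihilating $J$ such that the pair $(\Pi,\pi)$ is $(X,J)$-adapted. (ii) If $\pi:\mathrm{C}^*(X)+J\to B(H)$ is a unital $*$-representation annihilating $J$, then there is a unique unital $*$-representation $\Pi:\mathcal{B}(X,J)\to B(H)$ annihilating $\mathbb{M}_2(J)$ such that the pair $(\Pi,\pi)$ is $(X,J)$-adapted.
   Context: An operator system is a norm-closed self-adjoint subspace containing the unit; $\mathrm{C}^*(X)$ is the $\mathrm{C}^*$-subalgebra of $A$ generated by $X$. $\mathcal{S}(X,J)\subset\mathbb{M}_2(A)$ is the operator system of matrices $\begin{bmatrix} x & j\\ k & b\end{bmatrix}$ with $x\in X$, $j,k\in J$, $b\in J+\mathbb{C}1$; $\mathcal{B}(X,J)$ is the $\mathrm{C}^*$-algebra it generates in $\mathbb{M}_2(A)$, and it consists exactly of matrices $\begin{bmatrix} a & b\\ c & d\end{bmatrix}$ with $a\in\mathrm{C}^*(X)+J$, $b,c\in J$, $d\in J+\mathbb{C}1$. Let $\chi:J+\mathbb{C}1\to\mathbb{C}$ be the quotient map by $J$ ($\chi(j+\lambda1)=\lambda$). For $*$-representations $\Pi:\mathcal{B}(X,J)\to B(H)$ and $\pi:\mathrm{C}^*(X)+J\to B(H)$, the pair $(\Pi,\pi)$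 is $(X,J)$-adapted if $\Pi\left(\begin{bmatrix} a & b\\ c& d\end{bmatrix}\right)-\chi(d)1=\pi(a-\chi(d)1)$ for every $\begin{bmatrix} a & b\\ c& d\end{bmatrix}\in\mathcal{B}(X,J)$. *)

theory Defs
  imports "HOL-Analysis.Analysis"
begin

class cstar_algebra = real_normed_algebra_1 + banach +
  fixes ascale :: "complex \<Rightarrow> 'a \<Rightarrow> 'a"
    and astar :: "'a \<Rightarrow> 'a"
  assumes ascale_add_right: "ascale z (x + y) = ascale z x + ascale z y"
    and ascale_add_left: "ascale (z + w) x = ascale z x + ascale w x"
    and ascale_ascale: "ascale z (ascale w x) = ascale (z * w) x"
    and ascale_of_real: "ascale (complex_of_real r) x = scaleR r x"
    and ascale_mult_left: "ascale z (x * y) = ascale z x * y"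
    and ascale_mult_right: "ascale z (x * y) = x * ascale z y"
    and norm_ascale: "norm (ascale z x) = cmod z * norm x"
    and astar_astar: "astar (astar x) = x"
    and astar_add: "astar (x + y) = astar x + astar y"
    and astar_ascale: "astar (ascale z x) = ascale (cnj z) (astar x)"
    and astar_mult: "astar (x * y) = astar y * astar x"
    and cstar_identity: "norm (astar x * x) = (norm x)^2"

class complex_hilbert = ab_group_add +
  fixes hscale :: "complex \<Rightarrow> 'a \<Rightarrow> 'a"
    and hinner :: "'a \<Rightarrow> 'a \<Rightarrow> complex"
  assumes hscale_add_right: "hscale z (x + y) = hscale z x + hscale z y"
    and hscale_add_left: "hscale (z + w) x = hscale z x + hscale w x"
    and hscale_hscale: "hscale z (hscale w x) = hscale (z * w) x"
    and hscale_one: "hscale 1 x = x"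
    and hinner_add_left: "hinner (x + y) u = hinner x u + hinner y u"
    and hinner_scale_left: "hinner (hscale z x) u = z * hinner x u"
    and hinner_sym: "hinner u x = cnj (hinner x u)"
    and hinner_nonneg: "0 \<le> Re (hinner x x)"
    and hinner_definite: "hinner x x = 0 \<Longrightarrow> x = 0"
    and hilbert_complete:
      "(\<forall>e>0. \<exists>N. \<forall>m\<ge>N. \<forall>n\<ge>N. sqrt (Re (hinner (s m - s n) (s m - s n))) < e)
        \<Longrightarrow> \<exists>l. (\<lambda>n. sqrt (Re (hinner (s n - l) (s n - l)))) \<longlonglongrightarrow> 0"

definition hnorm :: "'h::complex_hilbert \<Rightarrow> real" where
  "hnorm x = sqrt (Re (hinner x x))"

definition BH :: "('h::complex_hilbert \<Rightarrow> 'h) set" where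
  "BH = {T. (\<forall>x y. T (x + y) = T x + T y) \<and> (\<forall>z x. T (hscale z x) = hscale z (T x))
           \<and> (\<exists>K. \<forall>x. hnorm (T x) \<le> K * hnorm x)}"

definition hadj :: "('h::complex_hilbert \<Rightarrow> 'h) \<Rightarrow> ('h \<Rightarrow> 'h)" where
  "hadj T = (SOME S. \<forall>x y. hinner (T x) y = hinner x (S y))"

definition star_rep_on ::
  "'b set \<Rightarrow> ('b \<Rightarrow> 'b \<Rightarrow> 'b) \<Rightarrow> ('b \<Rightarrow> 'b \<Rightarrow> 'b) \<Rightarrow> (complex \<Rightarrow> 'b \<Rightarrow> 'b)
     \<Rightarrow> ('b \<Rightarrow> 'b) \<Rightarrow> ('b \<Rightarrow> 'h::complex_hilbert \<Rightarrow> 'h) \<Rightarrow> bool" where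
  "star_rep_on D add mul sc st pi_rep \<longleftrightarrow>
     (\<forall>a\<in>D. pi_rep a \<in> BH) \<and>
     (\<forall>a\<in>D. \<forall>b\<in>D. pi_rep (add a b) = (\<lambda>h. pi_rep a h + pi_rep b h)) \<and>
     (\<forall>a\<in>D. \<forall>b\<in>D. pi_rep (mul a b) = pi_rep a \<circ> pi_rep b) \<and>
     (\<forall>z. \<forall>a\<in>D. pi_rep (sc z a) = (\<lambda>h. hscale z (pi_rep a h))) \<and>
     (\<forall>a\<in>D. pi_rep (st a) = hadj (pi_rep a))"

definition csubspace :: "'a::cstar_algebra set \<Rightarrow> bool" where
  "csubspace S \<longleftrightarrow> 0 \<in> S \<and> (\<forall>x\<in>S. \<forall>y\<in>S. x + y \<in> S) \<and> (\<forall>z. \<forall>x\<in>S. ascale z x \<in> S)"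

definition operator_system :: "'a::cstar_algebra set \<Rightarrow> bool" where
  "operator_system X \<longleftrightarrow> csubspace X \<and> closed X \<and> (\<forall>x\<in>X. astar x \<in> X) \<and> 1 \<in> X"

definition closed_ideal :: "'a::cstar_algebra set \<Rightarrow> bool" where
  "closed_ideal J \<longleftrightarrow> csubspace J \<and> closed J \<and> (\<forall>a. \<forall>j\<in>J. a * j \<in> J \<and> j * a \<in> J)"

definition cstar_subalgebra :: "'a::cstar_algebra set \<Rightarrow> bool" where
  "cstar_subalgebra B \<longleftrightarrow> csubspace B \<and> closed B \<and> (\<forall>x\<in>B. astar x \<in> B)
     \<and> (\<forall>x\<in>B. \<forall>y\<in>B. x * y \<in> B)"

definition cstar_gen :: "'a::cstar_algebra set \<Rightarrow> 'a set" where
  "cstar_gen X = \<Inter>{B. X \<subseteq> B \<and> cstar_subalgebra B}"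

definition sum_set :: "'a::cstar_algebra set \<Rightarrow> 'a set \<Rightarrow> 'a set" where
  "sum_set S T = {s + t | s t. s \<in> S \<and> t \<in> T}"

definition unitization_set :: "'a::cstar_algebra set \<Rightarrow> 'a set" where
  "unitization_set J = {j + ascale c 1 | j c. j \<in> J}"

definition chi :: "'a::cstar_algebra set \<Rightarrow> 'a \<Rightarrow> complex" where
  "chi J d = (SOME c. d - ascale c 1 \<in> J)"

datatype 'a mat2 = M2 'a 'a 'a 'a

fun m2add :: "'a::cstar_algebra mat2 \<Rightarrow> 'a mat2 \<Rightarrow> 'a mat2" where
  "m2add (M2 a b c d) (M2 a' b' c' d') = M2 (a + a') (b + b') (c + c') (d + d')"

fun m2mult :: "'a::cstar_algebra mat2 \<Rightarrow> 'a mat2 \<Rightarrow> 'a mat2" where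
  "m2mult (M2 a b c d) (M2 a' b' c' d') =
     M2 (a * a' + b * c') (a * b' + b * d') (c * a' + d * c') (c * b' + d * d')"

fun m2scale :: "complex \<Rightarrow> 'a::cstar_algebra mat2 \<Rightarrow> 'a mat2" where
  "m2scale z (M2 a b c d) = M2 (ascale z a) (ascale z b) (ascale z c) (ascale z d)"

fun m2adj :: "'a::cstar_algebra mat2 \<Rightarrow> 'a mat2" where
  "m2adj (M2 a b c d) = M2 (astar a) (astar c) (astar b) (astar d)"

definition m2one :: "'a::cstar_algebra mat2" where
  "m2one = M2 1 0 0 1"

definition M2_of :: "'a::cstar_algebra set \<Rightarrow> 'a mat2 set" where
  "M2_of J = {M2 a b c d | a b c d. a \<in> J \<and> b \<in> J \<and> c \<in> J \<and> d \<in> J}"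

text \<open>B(X,J), via its explicit description.\<close>
definition BXJ :: "'a::cstar_algebra set \<Rightarrow> 'a set \<Rightarrow> 'a mat2 set" where
  "BXJ X J = {M2 a b c d | a b c d. a \<in> sum_set (cstar_gen X) J \<and> b \<in> J \<and> c \<in> J
                \<and> d \<in> unitization_set J}"

definition adapted ::
  "'a::cstar_algebra set \<Rightarrow> 'a set \<Rightarrow> ('a mat2 \<Rightarrow> 'h::complex_hilbert \<Rightarrow> 'h) \<Rightarrow> ('a \<Rightarrow> 'h \<Rightarrow> 'h) \<Rightarrow> bool" where
  "adapted X J Pi_rep pi_rep \<longleftrightarrow>
     (\<forall>a b c d. M2 a b c d \<in> BXJ X J \<longrightarrow>
        (\<lambda>h. Pi_rep (M2 a b c d) h - hscale (chi J d) h) = pi_rep (a - ascale (chi J d) 1))"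

definition is_rep_A :: "'a::cstar_algebra set \<Rightarrow> ('a \<Rightarrow> 'h::complex_hilbert \<Rightarrow> 'h) \<Rightarrow> bool" where
  "is_rep_A D pi_rep \<longleftrightarrow> star_rep_on D (+) (*) ascale astar pi_rep"

definition is_rep_M2 :: "'a::cstar_algebra mat2 set \<Rightarrow> ('a mat2 \<Rightarrow> 'h::complex_hilbert \<Rightarrow> 'h) \<Rightarrow> bool" where
  "is_rep_M2 D Pi_rep \<longleftrightarrow> star_rep_on D m2add m2mult m2scale m2adj Pi_rep"

end

theory Submission
  imports Defs
begin


lemma ascale_zero_left[simp]: "ascale 0 (x::'a::cstar_algebra) = 0"
  using ascale_of_real[of 0 x] by simp

lemma ascale_one_left[simp]: "ascale 1 (x::'a::cstar_algebra) = x"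
  using ascale_of_real[of 1 x] by simp

lemma ascale_zero_right[simp]: "ascale z (0::'a::cstar_algebra) = 0"
  using ascale_add_right[of z "0::'a" 0] by simp

lemma astar_zero[simp]: "astar (0::'a::cstar_algebra) = 0"
  using astar_add[of "0::'a" 0] by simp

lemma ascale_minus_left: "ascale (-c) (x::'a::cstar_algebra) = - ascale c x"
  using ascale_add_left[of c "-c" x] by (metis add.commute eq_neg_iff_add_eq_0 ascale_zero_left add.right_inverse)

lemma ascale_diff_left: "ascale (c - d) (x::'a::cstar_algebra) = ascale c x - ascale d x"
  using ascale_add_left[of c "-d" x] by (simp add: ascale_minus_left)

lemma hscale_zero_left[simp]: "hscale 0 (x::'h::complex_hilbert) = 0"
  using hscale_add_left[of 0 0 x] by simp

lemma hscale_minus_left: "hscale (-c) (x::'h::complex_hilbert) = - hscale c x"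
  using hscale_add_left[of c "-c" x] by (metis add.commute eq_neg_iff_add_eq_0 hscale_zero_left add.right_inverse)

lemma cg_mem: "x \<in> cstar_gen X \<longleftrightarrow> (\<forall>B. X \<subseteq> B \<and> cstar_subalgebra B \<longrightarrow> x \<in> B)"
  unfolding cstar_gen_def by blast

lemma cg_sup: "X \<subseteq> cstar_gen X"
  using cg_mem by blast

lemma cg_add: "x \<in> cstar_gen X \<Longrightarrow> y \<in> cstar_gen X \<Longrightarrow> x + y \<in> cstar_gen X"
  unfolding cg_mem cstar_subalgebra_def csubspace_def by blast

lemma cg_mult: "x \<in> cstar_gen X \<Longrightarrow> y \<in> cstar_gen X \<Longrightarrow> x * y \<in> cstar_gen X"
  unfolding cg_mem cstar_subalgebra_def csubspace_def by blast

lemma cg_scale: "x \<in> cstar_gen X \<Longrightarrow> ascale z x \<in> cstar_gen X"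
  unfolding cg_mem cstar_subalgebra_def csubspace_def by blast

lemma cg_zero: "0 \<in> cstar_gen X"
  unfolding cg_mem cstar_subalgebra_def csubspace_def by blast

lemma ci_zero: "closed_ideal J \<Longrightarrow> 0 \<in> J"
  unfolding closed_ideal_def csubspace_def by blast

lemma ci_add: "closed_ideal J \<Longrightarrow> x \<in> J \<Longrightarrow> y \<in> J \<Longrightarrow> x + y \<in> J"
  unfolding closed_ideal_def csubspace_def by blast

lemma ci_scale: "closed_ideal J \<Longrightarrow> x \<in> J \<Longrightarrow> ascale z x \<in> J"
  unfolding closed_ideal_def csubspace_def by blast

lemma ci_multl: "closed_ideal J \<Longrightarrow> x \<in> J \<Longrightarrow> a * x \<in> J"
  unfolding closed_ideal_def by blast

lemma ci_multr: "closed_ideal J \<Longrightarrow> x \<in> J \<Longrightarrow> x * a \<in> J"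
  unfolding closed_ideal_def by blast

lemma ci_diff: "closed_ideal J \<Longrightarrow> x \<in> J \<Longrightarrow> y \<in> J \<Longrightarrow> x - y \<in> J"
  using ci_add[of J x "ascale (-1) y"] ci_scale[of J y "-1"]
  by (simp add: ascale_minus_left)

lemma ss_intro: "x \<in> cstar_gen X \<Longrightarrow> j \<in> J \<Longrightarrow> a = x + j \<Longrightarrow> a \<in> sum_set (cstar_gen X) J"
  unfolding sum_set_def by blast

lemma ss_J: "closed_ideal J \<Longrightarrow> j \<in> J \<Longrightarrow> j \<in> sum_set (cstar_gen X) J"
  by (rule ss_intro[OF cg_zero]) simp_all

lemma ss_one: "closed_ideal J \<Longrightarrow> operator_system X \<Longrightarrow> 1 \<in> sum_set (cstar_gen X) J"
  by (rule ss_intro[of 1 X 0]) (auto simp: ci_zero operator_system_def intro: cg_sup[THEN subsetD])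

lemma ss_zero: "closed_ideal J \<Longrightarrow> 0 \<in> sum_set (cstar_gen X) J"
  using ss_J ci_zero by blast

lemma ss_add: "closed_ideal J \<Longrightarrow> a \<in> sum_set (cstar_gen X) J \<Longrightarrow> b \<in> sum_set (cstar_gen X) J
   \<Longrightarrow> a + b \<in> sum_set (cstar_gen X) J"
proof -
  assume J: "closed_ideal J" and "a \<in> sum_set (cstar_gen X) J" "b \<in> sum_set (cstar_gen X) J"
  then obtain x j y k where "a = x + j" "b = y + k" "x \<in> cstar_gen X" "y \<in> cstar_gen X" "j \<in> J" "k \<in> J"
    unfolding sum_set_def by blast
  moreover have "a + b = (x + y) + (j + k)" using calculation by (simp add: algebra_simps)
  ultimately show ?thesis using ss_intro[OF cg_add ci_add[OF J]] by blast
qed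

lemma ss_scale: "closed_ideal J \<Longrightarrow> a \<in> sum_set (cstar_gen X) J
   \<Longrightarrow> ascale z a \<in> sum_set (cstar_gen X) J"
proof -
  assume J: "closed_ideal J" and "a \<in> sum_set (cstar_gen X) J"
  then obtain x j where "a = x + j" "x \<in> cstar_gen X" "j \<in> J"
    unfolding sum_set_def by blast
  moreover have "ascale z a = ascale z x + ascale z j" using calculation by (simp add: ascale_add_right)
  ultimately show ?thesis using ss_intro[OF cg_scale ci_scale[OF J]] by blast
qed

lemma ss_mult: "closed_ideal J \<Longrightarrow> a \<in> sum_set (cstar_gen X) J \<Longrightarrow> b \<in> sum_set (cstar_gen X) J
   \<Longrightarrow> a * b \<in> sum_set (cstar_gen X) J"
proof -
  assume J: "closed_ideal J" and "a \<in> sum_set (cstar_gen X) J" "b \<in> sum_set (cstar_gen X) J"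
  then obtain x j y k where "a = x + j" "b = y + k" "x \<in> cstar_gen X" "y \<in> cstar_gen X" "j \<in> J" "k \<in> J"
    unfolding sum_set_def by blast
  moreover have "a * b = (x * y) + (x * k + j * y + j * k)" using calculation by (simp add: algebra_simps)
  moreover have "x * k + j * y + j * k \<in> J"
    using ci_add[OF J ci_add[OF J ci_multl[OF J \<open>k \<in> J\<close>] ci_multr[OF J \<open>j \<in> J\<close>]] ci_multr[OF J \<open>j \<in> J\<close>]]
    by simp
  ultimately show ?thesis using ss_intro[OF cg_mult] by blast
qed

lemma ss_diff_one: "closed_ideal J \<Longrightarrow> operator_system X \<Longrightarrow> a \<in> sum_set (cstar_gen X) J
   \<Longrightarrow> a - ascale c 1 \<in> sum_set (cstar_gen X) J"
  using ss_add[of J a X "ascale (-c) 1"] ss_scale[OF _ ss_one, of J X "-c"]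
  by (simp add: ascale_minus_left)

lemma chi_eq:
  assumes J: "closed_ideal J" and n1: "1 \<notin> J" and j: "j \<in> J"
  shows "chi J (j + ascale c 1) = c"
proof (rule ccontr)
  define c0 where "c0 = chi J (j + ascale c 1)"
  assume "chi J (j + ascale c 1) \<noteq> c"
  hence ne: "c - c0 \<noteq> 0" unfolding c0_def by simp
  have "j + ascale c 1 - ascale c0 1 \<in> J"
    unfolding c0_def chi_def by (rule someI[of _ c]) (simp add: j)
  hence "(j + ascale c 1 - ascale c0 1) - j \<in> J" using ci_diff[OF J _ j] by blast
  hence "ascale (c - c0) (1::'a) \<in> J" by (simp add: ascale_diff_left)
  hence "ascale (1 / (c - c0)) (ascale (c - c0) (1::'a)) \<in> J" using ci_scale[OF J] by blast
  hence "(1::'a) \<in> J" using ne by (simp add: ascale_ascale)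
  thus False using n1 by simp
qed

theorem lemma2p5:
  fixes X J :: "'a::cstar_algebra set"
  assumes "closed_ideal J" and "operator_system X"
  shows "(\<forall>Pi_rep :: 'a mat2 \<Rightarrow> 'h::complex_hilbert \<Rightarrow> 'h.
            is_rep_M2 (BXJ X J) Pi_rep \<and> Pi_rep m2one = id \<and> (\<forall>m\<in>M2_of J. Pi_rep m = (\<lambda>_. 0)) \<longrightarrow>
            (\<exists>pi_rep. is_rep_A (sum_set (cstar_gen X) J) pi_rep \<and> (\<forall>j\<in>J. pi_rep j = (\<lambda>_. 0))
                  \<and> adapted X J Pi_rep pi_rep \<and>
                 (\<forall>pi_rep'. is_rep_A (sum_set (cstar_gen X) J) pi_rep' \<and> (\<forall>j\<in>J. pi_rep' j = (\<lambda>_. 0))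
                        \<and> adapted X J Pi_rep pi_rep' \<longrightarrow> (\<forall>a\<in>sum_set (cstar_gen X) J. pi_rep' a = pi_rep a))))
       \<and> (\<forall>pi_rep :: 'a \<Rightarrow> 'h \<Rightarrow> 'h.
            is_rep_A (sum_set (cstar_gen X) J) pi_rep \<and> pi_rep 1 = id \<and> (\<forall>j\<in>J. pi_rep j = (\<lambda>_. 0)) \<longrightarrow>
            (\<exists>Pi_rep. is_rep_M2 (BXJ X J) Pi_rep \<and> Pi_rep m2one = id \<and> (\<forall>m\<in>M2_of J. Pi_rep m = (\<lambda>_. 0))
                  \<and> adapted X J Pi_rep pi_rep \<and>
                 (\<forall>Pi_rep'. is_rep_M2 (BXJ X J) Pi_rep' \<and> Pi_rep' m2one = id \<and> (\<forall>m\<in>M2_of J. Pi_rep' m = (\<lambda>_. 0))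
                        \<and> adapted X J Pi_rep' pi_rep \<longrightarrow> (\<forall>m\<in>BXJ X J. Pi_rep' m = Pi_rep m))))"
proof -
  note J = assms(1) and XS = assms(2)
  let ?D = "sum_set (cstar_gen X) J"
  have BXJ_iff: "M2 a b c d \<in> BXJ X J \<longleftrightarrow> a \<in> ?D \<and> b \<in> J \<and> c \<in> J \<and> d \<in> unitization_set J"
    for a b c d unfolding BXJ_def by blast
  have unit0: "j \<in> J \<Longrightarrow> j \<in> unitization_set J" for j
    unfolding unitization_set_def by (rule CollectI, rule exI[of _ j], rule exI[of _ 0]) simp
  have unitc: "j \<in> J \<Longrightarrow> j + ascale c 1 \<in> unitization_set J" for j c
    unfolding unitization_set_def by blast
  have one_in: "m2one \<in> BXJ X J"
    unfolding m2one_def BXJ_iff using ss_one[OF J XS] ci_zero[OF J] unitc[of 0 1] by simp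
  have diag: "a \<in> ?D \<Longrightarrow> M2 a 0 0 0 \<in> BXJ X J" for a
    unfolding BXJ_iff using ci_zero[OF J] unit0 by blast
  have Mof: "M2 a b c d \<in> M2_of J \<longleftrightarrow> a \<in> J \<and> b \<in> J \<and> c \<in> J \<and> d \<in> J" for a b c d
    unfolding M2_of_def by blast
  show ?thesis
  proof (intro conjI allI impI)
    fix Pi_rep :: "'a mat2 \<Rightarrow> 'h::complex_hilbert \<Rightarrow> 'h"
    assume H: "is_rep_M2 (BXJ X J) Pi_rep \<and> Pi_rep m2one = id \<and> (\<forall>m\<in>M2_of J. Pi_rep m = (\<lambda>_. 0))"
    hence PB: "\<And>m. m \<in> BXJ X J \<Longrightarrow> Pi_rep m \<in> BH"
      and Padd: "\<And>m n. m \<in> BXJ X J \<Longrightarrow> n \<in> BXJ X J \<Longrightarrow> Pi_rep (m2add m n) = (\<lambda>h. Pi_rep m h + Pi_rep n h)"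
      and Pmul: "\<And>m n. m \<in> BXJ X J \<Longrightarrow> n \<in> BXJ X J \<Longrightarrow> Pi_rep (m2mult m n) = Pi_rep m \<circ> Pi_rep n"
      and Psc: "\<And>z m. m \<in> BXJ X J \<Longrightarrow> Pi_rep (m2scale z m) = (\<lambda>h. hscale z (Pi_rep m h))"
      and Pst: "\<And>m. m \<in> BXJ X J \<Longrightarrow> Pi_rep (m2adj m) = hadj (Pi_rep m)"
      and P1: "Pi_rep m2one = id" and PJ: "\<And>m. m \<in> M2_of J \<Longrightarrow> Pi_rep m = (\<lambda>_. 0)"
      unfolding is_rep_M2_def star_rep_on_def by blast+
    define pi where "pi a = Pi_rep (M2 a 0 0 0)" for a
    have rep: "is_rep_A ?D pi"
      unfolding is_rep_A_def star_rep_on_def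
    proof (intro conjI ballI allI)
      fix a assume a: "a \<in> ?D"
      show "pi a \<in> BH" unfolding pi_def using PB diag a by blast
      show "pi (astar a) = hadj (pi a)" unfolding pi_def using Pst[OF diag[OF a]] by simp
      fix z show "pi (ascale z a) = (\<lambda>h. hscale z (pi a h))"
        unfolding pi_def using Psc[OF diag[OF a], of z] by simp
    next
      fix a b assume a: "a \<in> ?D" and b: "b \<in> ?D"
      show "pi (a + b) = (\<lambda>h. pi a h + pi b h)"
        unfolding pi_def using Padd[OF diag[OF a] diag[OF b]] by simp
      show "pi (a * b) = pi a \<circ> pi b"
        unfolding pi_def using Pmul[OF diag[OF a] diag[OF b]] by simp
    qed
    have ann: "\<forall>j\<in>J. pi j = (\<lambda>_. 0)"
      unfolding pi_def using PJ Mof ci_zero[OF J] by blast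
    show "\<exists>pi_rep. is_rep_A ?D pi_rep \<and> (\<forall>j\<in>J. pi_rep j = (\<lambda>_. 0))
                  \<and> adapted X J Pi_rep pi_rep \<and>
                 (\<forall>pi_rep'. is_rep_A ?D pi_rep' \<and> (\<forall>j\<in>J. pi_rep' j = (\<lambda>_. 0))
                        \<and> adapted X J Pi_rep pi_rep' \<longrightarrow> (\<forall>a\<in>?D. pi_rep' a = pi_rep a))"
    proof (cases "\<forall>h::'h. h = 0")
      case True
      have eqf: "f = g" for f g :: "'h \<Rightarrow> 'h"
      proof (rule ext)
        fix x show "f x = g x" using True by metis
      qed
      show ?thesis
        apply (rule exI[of _ pi])
        apply (intro conjI rep ann allI impI ballI)
         apply (unfold adapted_def)
         apply (intro allI impI)
         apply (rule eqf)
        apply (rule eqf)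
        done
    next
      case False
      have n1: "(1::'a) \<notin> J"
      proof
        assume "(1::'a) \<in> J"
        hence "m2one \<in> M2_of J" unfolding m2one_def Mof using ci_zero[OF J] by simp
        hence "Pi_rep m2one = (\<lambda>_. 0)" using PJ by blast
        moreover obtain h :: 'h where "h \<noteq> 0" using False by blast
        moreover have "Pi_rep m2one h = h" using P1 by simp
        ultimately show False by simp
      qed
      have chi0: "chi J 0 = 0" using chi_eq[OF J n1 ci_zero[OF J], of 0] by simp
      have adp: "adapted X J Pi_rep pi"
        unfolding adapted_def
      proof (intro allI impI)
        fix a b c d assume m: "M2 a b c d \<in> BXJ X J"
        hence a: "a \<in> ?D" and b: "b \<in> J" and c: "c \<in> J" and "d \<in> unitization_set J"
          using BXJ_iff by blast+
        then obtain j l where j: "j \<in> J" and d: "d = j + ascale l 1"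
          unfolding unitization_set_def by blast
        have chid: "chi J d = l" using chi_eq[OF J n1 j] d by simp
        have al: "a - ascale l 1 \<in> ?D" using ss_diff_one[OF J XS a] .
        have m1: "M2 (a - ascale l 1) 0 0 0 \<in> BXJ X J" using diag[OF al] .
        have m2: "M2 0 b c j \<in> BXJ X J" unfolding BXJ_iff using ss_zero[OF J] b c unit0 j by blast
        have m3: "M2 (ascale l 1) b c (j + ascale l 1) \<in> BXJ X J"
          unfolding BXJ_iff using ss_scale[OF J ss_one[OF J XS]] b c unitc j by blast
        have e3: "M2 (ascale l 1) b c (j + ascale l 1) = m2add (M2 0 b c j) (m2scale l m2one)"
          by (simp add: m2one_def)
        have e: "M2 a b c d = m2add (M2 (a - ascale l 1) 0 0 0) (M2 (ascale l 1) b c (j + ascale l 1))"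
          using d by simp
        have PJ2: "Pi_rep (M2 0 b c j) = (\<lambda>_. 0)" using PJ Mof ci_zero[OF J] b c j by blast
        have m4: "m2scale l m2one \<in> BXJ X J"
          using ss_scale[OF J ss_one[OF J XS]] ci_zero[OF J] unitc[of 0 l]
          by (simp add: m2one_def BXJ_iff)
        have s1: "Pi_rep (M2 a b c d) = (\<lambda>h. Pi_rep (M2 (a - ascale l 1) 0 0 0) h
                    + Pi_rep (M2 (ascale l 1) b c (j + ascale l 1)) h)"
          unfolding e by (rule Padd[OF m1 m3])
        have s2: "Pi_rep (M2 (ascale l 1) b c (j + ascale l 1)) = (\<lambda>h. Pi_rep (M2 0 b c j) h + Pi_rep (m2scale l m2one) h)"
          unfolding e3 by (rule Padd[OF m2 m4])
        have s3: "Pi_rep (m2scale l m2one) = (\<lambda>h. hscale l h)"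
          using Psc[OF one_in, of l] P1 by simp
        show "(\<lambda>h. Pi_rep (M2 a b c d) h - hscale (chi J d) h) = pi (a - ascale (chi J d) 1)"
          unfolding chid s1 s2 s3 PJ2 pi_def by simp
      qed
      show ?thesis
      proof (rule exI[of _ pi], intro conjI rep ann adp allI impI ballI)
        fix pi' a assume H': "is_rep_A ?D pi' \<and> (\<forall>j\<in>J. pi' j = (\<lambda>_. 0)) \<and> adapted X J Pi_rep pi'"
          and a: "a \<in> ?D"
        have "(\<lambda>h. Pi_rep (M2 a 0 0 0) h - hscale (chi J 0) h) = pi' (a - ascale (chi J 0) 1)"
          using H' diag[OF a] unfolding adapted_def by blast
        thus "pi' a = pi a" unfolding pi_def chi0 by simp
      qed
    qed
  next
    fix pi :: "'a \<Rightarrow> 'h::complex_hilbert \<Rightarrow> 'h"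
    assume H: "is_rep_A ?D pi \<and> pi 1 = id \<and> (\<forall>j\<in>J. pi j = (\<lambda>_. 0))"
    hence pB: "\<And>a. a \<in> ?D \<Longrightarrow> pi a \<in> BH"
      and padd: "\<And>a b. a \<in> ?D \<Longrightarrow> b \<in> ?D \<Longrightarrow> pi (a + b) = (\<lambda>h. pi a h + pi b h)"
      and pmul: "\<And>a b. a \<in> ?D \<Longrightarrow> b \<in> ?D \<Longrightarrow> pi (a * b) = pi a \<circ> pi b"
      and psc: "\<And>z a. a \<in> ?D \<Longrightarrow> pi (ascale z a) = (\<lambda>h. hscale z (pi a h))"
      and pst: "\<And>a. a \<in> ?D \<Longrightarrow> pi (astar a) = hadj (pi a)"
      and p1: "pi 1 = id" and pJ: "\<And>j. j \<in> J \<Longrightarrow> pi j = (\<lambda>_. 0)"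
      unfolding is_rep_A_def star_rep_on_def by blast+
    have key: "a \<in> ?D \<Longrightarrow> pi (a - ascale k 1) = (\<lambda>h. pi a h - hscale k h)" for a k
    proof -
      assume a: "a \<in> ?D"
      have eqk: "a - ascale k 1 = a + ascale (-k) 1" by (simp add: ascale_minus_left)
      have "pi (a - ascale k 1) = (\<lambda>h. pi a h + pi (ascale (-k) 1) h)"
        unfolding eqk by (rule padd[OF a ss_scale[OF J ss_one[OF J XS]]])
      also have "\<dots> = (\<lambda>h. pi a h - hscale k h)"
        using psc[OF ss_one[OF J XS], of "-k"] p1 by (simp add: hscale_minus_left)
      finally show ?thesis .
    qed
    define Pi where "Pi m = (case m of M2 a b c d \<Rightarrow> pi a)" for m
    have PiM: "Pi (M2 a b c d) = pi a" for a b c d unfolding Pi_def by simp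
    have memB: "m \<in> BXJ X J \<Longrightarrow> (\<exists>a b c d. m = M2 a b c d \<and> a \<in> ?D \<and> b \<in> J \<and> c \<in> J)" for m
      unfolding BXJ_def by blast
    have rep: "is_rep_M2 (BXJ X J) Pi"
      unfolding is_rep_M2_def star_rep_on_def
    proof (intro conjI ballI allI)
      fix m assume "m \<in> BXJ X J"
      then obtain a b c d where m: "m = M2 a b c d" and a: "a \<in> ?D" using memB by blast
      show "Pi m \<in> BH" unfolding m PiM using pB[OF a] .
      show "Pi (m2adj m) = hadj (Pi m)" unfolding m by (simp add: PiM pst[OF a])
      fix z show "Pi (m2scale z m) = (\<lambda>h. hscale z (Pi m h))" unfolding m by (simp add: PiM psc[OF a])
    next
      fix m n assume "m \<in> BXJ X J" "n \<in> BXJ X J"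
      then obtain a b c d a' b' c' d' where m: "m = M2 a b c d" and a: "a \<in> ?D" and b: "b \<in> J"
        and n: "n = M2 a' b' c' d'" and a': "a' \<in> ?D" and c': "c' \<in> J" using memB by metis
      show "Pi (m2add m n) = (\<lambda>h. Pi m h + Pi n h)" unfolding m n by (simp add: PiM padd[OF a a'])
      have bc: "b * c' \<in> ?D" using ss_J[OF J ci_multr[OF J b]] .
      have "Pi (m2mult m n) = pi (a * a' + b * c')" unfolding m n by (simp add: PiM)
      also have "\<dots> = (\<lambda>h. pi (a * a') h + pi (b * c') h)" using padd[OF ss_mult[OF J a a'] bc] .
      also have "\<dots> = pi a \<circ> pi a'" using pmul[OF a a'] pJ[OF ci_multr[OF J b]] by (simp add: comp_def)
      finally show "Pi (m2mult m n) = Pi m \<circ> Pi n" unfolding m n PiM .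
    qed
    have adp: "adapted X J Pi pi"
      unfolding adapted_def PiM
    proof (intro allI impI)
      fix a b c d assume "M2 a b c d \<in> BXJ X J"
      hence "a \<in> ?D" using BXJ_iff by blast
      thus "(\<lambda>h. pi a h - hscale (chi J d) h) = pi (a - ascale (chi J d) 1)" using key by simp
    qed
    show "\<exists>Pi_rep. is_rep_M2 (BXJ X J) Pi_rep \<and> Pi_rep m2one = id \<and> (\<forall>m\<in>M2_of J. Pi_rep m = (\<lambda>_. 0))
                  \<and> adapted X J Pi_rep pi \<and>
                 (\<forall>Pi_rep'. is_rep_M2 (BXJ X J) Pi_rep' \<and> Pi_rep' m2one = id \<and> (\<forall>m\<in>M2_of J. Pi_rep' m = (\<lambda>_. 0))
                        \<and> adapted X J Pi_rep' pi \<longrightarrow> (\<forall>m\<in>BXJ X J. Pi_rep' m = Pi_rep m))"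
    proof (rule exI[of _ Pi], intro conjI rep adp allI impI ballI)
      show "Pi m2one = id" unfolding m2one_def PiM using p1 .
    next
      fix m assume "m \<in> M2_of J"
      then obtain a b c d where "m = M2 a b c d" "a \<in> J" unfolding M2_of_def by blast
      thus "Pi m = (\<lambda>_. 0)" using PiM pJ by simp
    next
      fix Pi' m assume H': "is_rep_M2 (BXJ X J) Pi' \<and> Pi' m2one = id \<and> (\<forall>m\<in>M2_of J. Pi' m = (\<lambda>_. 0))
                        \<and> adapted X J Pi' pi" and mB: "m \<in> BXJ X J"
      then obtain a b c d where m: "m = M2 a b c d" and a: "a \<in> ?D" using memB by blast
      have "(\<lambda>h. Pi' m h - hscale (chi J d) h) = pi (a - ascale (chi J d) 1)"
        using H' mB unfolding adapted_def m by blast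
      hence feq: "(\<lambda>h. Pi' m h - hscale (chi J d) h) = (\<lambda>h. pi a h - hscale (chi J d) h)"
        using key[OF a] by simp
      have "Pi' m h = pi a h" for h using fun_cong[OF feq, of h] by simp
      thus "Pi' m = Pi m" unfolding m PiM by (rule ext)
    qed
  qed
qed


end
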